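(* If every ample class is dismantlable, then for every $n$ the cross-polytope $O_n$ is extendably shellable.
   Context: For a finite set $X$, a concept class is $C\subseteq 2^X$; $Y\subseteq X$ is shattered by $C$ if $\{c\cap Y:c\in C\}=2^Y$. A cube of $2^X$ is $\{T\cup Z:Z\subseteq Y\}$ with $Y\subseteq X$, $T\subseteq X\setminus Y$ ($Y$ its support); $C$ is ample if every set shattered by $C$ is the support of a cube contained in $C$. $C$ is dismantlable if it admits an ordering $c_1,\dots,c_m$ of all its concepts such that every level set $\{c_1,\dots,c_i\}$ is ample. With $\pm X=\{\pm x_1,\dots,\pm x_n\}$, the cross-polytope $O_n$ is the simplicial complex whose facets are the sets $\sigma\subseteq\pm X$ containing exactly one of $+x_i,-x_i$ for each $i$. A partial shelling is a sequence $\sigma_1,\dots,\sigma_m$ of distinct facets such that for each $2\le j\le m$ the family $2^{\sigma_j}\cap\bigcup_{i<j}2^{\sigma_i}$ is a pure complex whose maximal sets all have size $n-1$; a shelling is a partial shelling containing all facets. $O_n$ is extendably shellable if every partial shelling can be extended to a shelling. *)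

theory Defs
  imports Main
begin

definition shatters :: "'a set set \<Rightarrow> 'a set \<Rightarrow> bool" where
  "shatters C Y \<longleftrightarrow> {c \<inter> Y | c. c \<in> C} = Pow Y"

definition cube :: "'a set \<Rightarrow> 'a set \<Rightarrow> 'a set set" where
  "cube T Y = {T \<union> Z | Z. Z \<subseteq> Y}"

definition ample :: "'a set \<Rightarrow> 'a set set \<Rightarrow> bool" where
  "ample X C \<longleftrightarrow> (\<forall>Y. Y \<subseteq> X \<longrightarrow> shatters C Y \<longrightarrow>
      (\<exists>T. T \<subseteq> X - Y \<and> cube T Y \<subseteq> C))"

definition dismantlable :: "'a set \<Rightarrow> 'a set set \<Rightarrow> bool" where
  "dismantlable X C \<longleftrightarrow> (\<exists>cs. distinct cs \<and> set cs = C \<and>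
      (\<forall>i. 1 \<le> i \<and> i \<le> length cs \<longrightarrow> ample X (set (take i cs))))"

(* vertices of the cross-polytope O_n: (i, True) = +x_i, (i, False) = -x_i, for i < n *)
definition cross_facets :: "nat \<Rightarrow> (nat \<times> bool) set set" where
  "cross_facets n = {\<sigma>. \<sigma> \<subseteq> {0..<n} \<times> UNIV \<and>
      (\<forall>i<n. ((i, True) \<in> \<sigma>) \<noteq> ((i, False) \<in> \<sigma>))}"

definition maximal_sets :: "'a set set \<Rightarrow> 'a set set" where
  "maximal_sets F = {s \<in> F. \<forall>t \<in> F. s \<subseteq> t \<longrightarrow> s = t}"

definition pure_of_size :: "'a set set \<Rightarrow> nat \<Rightarrow> bool" where
  "pure_of_size F k \<longleftrightarrow> (\<forall>s \<in> maximal_sets F. finite s \<and> card s = k)"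

definition partial_shelling :: "nat \<Rightarrow> (nat \<times> bool) set list \<Rightarrow> bool" where
  "partial_shelling n \<sigma>s \<longleftrightarrow> distinct \<sigma>s \<and> set \<sigma>s \<subseteq> cross_facets n \<and>
     (\<forall>j. 1 \<le> j \<and> j < length \<sigma>s \<longrightarrow>
        pure_of_size (Pow (\<sigma>s ! j) \<inter> (\<Union>i<j. Pow (\<sigma>s ! i))) (n - 1))"

definition shelling :: "nat \<Rightarrow> (nat \<times> bool) set list \<Rightarrow> bool" where
  "shelling n \<sigma>s \<longleftrightarrow> partial_shelling n \<sigma>s \<and> set \<sigma>s = cross_facets n"

definition extendably_shellable :: "nat \<Rightarrow> bool" where
  "extendably_shellable n \<longleftrightarrow>
     (\<forall>\<sigma>s. partial_shelling n \<sigma>s \<longrightarrow> (\<exists>\<tau>s. shelling n (\<sigma>s @ \<tau>s)))"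

end

theory Submission
  imports Defs
begin

definition sd :: "'a set \<Rightarrow> 'a set \<Rightarrow> 'a set" where
  "sd a b = (a - b) \<union> (b - a)"

lemma shattersI:
  assumes "\<And>S. S \<subseteq> Y \<Longrightarrow> \<exists>c\<in>C. c \<inter> Y = S"
  shows "shatters C Y"
  unfolding shatters_def using assms by blast

lemma shattersD:
  assumes "shatters C Y" "S \<subseteq> Y"
  shows "\<exists>c\<in>C. c \<inter> Y = S"
proof -
  have e: "{c \<inter> Y | c. c \<in> C} = Pow Y" using assms(1) unfolding shatters_def .
  have "S \<in> Pow Y" using assms(2) by simp
  then have "S \<in> {c \<inter> Y | c. c \<in> C}" unfolding e .
  then obtain c where "c \<in> C" "S = c \<inter> Y" by blast
  then show ?thesis by blast
qed

lemma lift: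
  assumes "finite E"
  shows "E \<subseteq> X \<Longrightarrow> T0 \<subseteq> E \<Longrightarrow> Y \<subseteq> X - E
    \<Longrightarrow> (\<forall>S. S \<subseteq> Y \<longrightarrow> (\<exists>c\<in>C. c \<inter> E = T0 \<and> c \<inter> Y = S))
    \<Longrightarrow> (\<forall>S. S \<subseteq> X - E - Y \<longrightarrow> (\<exists>c. c \<subseteq> X \<and> c \<notin> C \<and> c \<inter> E = T0 \<and> c \<inter> (X - E - Y) = S))
    \<Longrightarrow> \<exists>Y'. Y' \<subseteq> X \<and> shatters C Y' \<and> shatters (Pow X - C) (X - Y')"
  using assms
proof (induction E arbitrary: T0 Y rule: finite_induct)
  case empty
  show ?case
  proof (intro exI conjI)
    show "Y \<subseteq> X" using empty by auto
    show "shatters C Y"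
      by (rule shattersI) (use empty.prems(4) in auto)
    show "shatters (Pow X - C) (X - Y)"
      by (rule shattersI) (use empty.prems(5) in auto)
  qed
next
  case (insert x F)
  define T1 where "T1 = (T0 - {x}) \<union> ({x} - T0)"
  have xX: "x \<in> X" and FX: "F \<subseteq> X" using insert.prems by auto
  have xY: "x \<notin> Y" using insert.prems by auto
  show ?case
  proof (cases "\<forall>S. S \<subseteq> Y \<longrightarrow> (\<exists>c\<in>C. c \<inter> insert x F = T1 \<and> c \<inter> Y = S)")
    case case_T: True
    show ?thesis
    proof (rule insert.IH[of "T0 - {x}" "insert x Y"])
      show "F \<subseteq> X" "T0 - {x} \<subseteq> F" "insert x Y \<subseteq> X - F" using insert.prems insert.hyps by auto
      show "\<forall>S. S \<subseteq> insert x Y \<longrightarrow> (\<exists>c\<in>C. c \<inter> F = T0 - {x} \<and> c \<inter> insert x Y = S)"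
      proof (intro allI impI)
        fix S assume S: "S \<subseteq> insert x Y"
        have SY: "S - {x} \<subseteq> Y" using S by auto
        show "\<exists>c\<in>C. c \<inter> F = T0 - {x} \<and> c \<inter> insert x Y = S"
        proof (cases "(x \<in> S) = (x \<in> T0)")
          case True
          obtain c where c: "c \<in> C" "c \<inter> insert x F = T0" "c \<inter> Y = S - {x}"
            using insert.prems(4) SY by blast
          show ?thesis using c True insert.hyps by (intro bexI[of _ c]) auto
        next
          case False
          obtain c where c: "c \<in> C" "c \<inter> insert x F = T1" "c \<inter> Y = S - {x}"
            using case_T SY by blast
          show ?thesis using c False insert.hyps unfolding T1_def by (intro bexI[of _ c]) auto
        qed
      qed
      show "\<forall>S. S \<subseteq> X - F - insert x Y \<longrightarrow> (\<exists>c. c \<subseteq> X \<and> c \<notin> C \<and> c \<inter> F = T0 - {x} \<and> c \<inter> (X - F - insert x Y) = S)"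
      proof (intro allI impI)
        fix S assume S: "S \<subseteq> X - F - insert x Y"
        then have "S \<subseteq> X - insert x F - Y" by auto
        then obtain c where c: "c \<subseteq> X" "c \<notin> C" "c \<inter> insert x F = T0" "c \<inter> (X - insert x F - Y) = S"
          using insert.prems(5) by blast
        show "\<exists>c. c \<subseteq> X \<and> c \<notin> C \<and> c \<inter> F = T0 - {x} \<and> c \<inter> (X - F - insert x Y) = S"
          using c insert.hyps by (intro exI[of _ c]) auto
      qed
    qed
  next
    case False
    then obtain S0 where S0: "S0 \<subseteq> Y" "\<And>c. c \<in> C \<Longrightarrow> \<not> (c \<inter> insert x F = T1 \<and> c \<inter> Y = S0)"
      by blast
    show ?thesis
    proof (rule insert.IH[of "T0 - {x}" "Y"])
      show "F \<subseteq> X" "T0 - {x} \<subseteq> F" "Y \<subseteq> X - F" using insert.prems insert.hyps by auto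
      show "\<forall>S. S \<subseteq> Y \<longrightarrow> (\<exists>c\<in>C. c \<inter> F = T0 - {x} \<and> c \<inter> Y = S)"
      proof (intro allI impI)
        fix S assume S: "S \<subseteq> Y"
        obtain c where c: "c \<in> C" "c \<inter> insert x F = T0" "c \<inter> Y = S"
          using insert.prems(4) S by blast
        show "\<exists>c\<in>C. c \<inter> F = T0 - {x} \<and> c \<inter> Y = S" using c insert.hyps by (intro bexI[of _ c]) auto
      qed
      show "\<forall>S. S \<subseteq> X - F - Y \<longrightarrow> (\<exists>c. c \<subseteq> X \<and> c \<notin> C \<and> c \<inter> F = T0 - {x} \<and> c \<inter> (X - F - Y) = S)"
      proof (intro allI impI)
        fix S assume S: "S \<subseteq> X - F - Y"
        show "\<exists>c. c \<subseteq> X \<and> c \<notin> C \<and> c \<inter> F = T0 - {x} \<and> c \<inter> (X - F - Y) = S"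
        proof (cases "(x \<in> S) = (x \<in> T0)")
          case True
          have "S - {x} \<subseteq> X - insert x F - Y" using S by auto
          then obtain c where c: "c \<subseteq> X" "c \<notin> C" "c \<inter> insert x F = T0" "c \<inter> (X - insert x F - Y) = S - {x}"
            using insert.prems(5) by blast
          show ?thesis using c True insert.hyps xX xY by (intro exI[of _ c]) auto
        next
          case False
          define c where "c = T1 \<union> S0 \<union> (S - {x})"
          have cE: "c \<inter> insert x F = T1" using S S0(1) insert.prems(2,3) unfolding c_def T1_def by auto
          have cY: "c \<inter> Y = S0" using S S0(1) insert.prems(2,3) unfolding c_def T1_def by auto
          have "c \<notin> C" using S0(2) cE cY by blast
          moreover have "c \<subseteq> X" using S S0(1) insert.prems(1-3) unfolding c_def T1_def by auto
          moreover have "c \<inter> F = T0 - {x}" using cE insert.hyps insert.prems(2) unfolding T1_def by auto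
          moreover have "c \<inter> (X - F - Y) = S" using S S0(1) insert.prems(1-3) False xX insert.hyps
            unfolding c_def T1_def by auto
          ultimately show ?thesis by blast
        qed
      qed
    qed
  qed
qed

lemma ample_no_violation:
  assumes "ample X C" "Y \<subseteq> X" "shatters C Y" "shatters (Pow X - C) (X - Y)"
  shows False
proof -
  have "\<exists>T. T \<subseteq> X - Y \<and> cube T Y \<subseteq> C"
    using assms(1) assms(2) assms(3) unfolding ample_def by simp
  then obtain T where T: "T \<subseteq> X - Y" "cube T Y \<subseteq> C" by blast
  obtain c where c: "c \<in> Pow X - C" "c \<inter> (X - Y) = T" using shattersD[OF assms(4) T(1)] by blast
  have ce: "c = T \<union> (c \<inter> Y)" using c(1) c(2) by blast
  have "c \<inter> Y \<subseteq> Y" by blast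
  then have "c \<in> cube T Y" unfolding cube_def using ce by blast
  then show False using c(1) T(2) by blast
qed

lemma no_violation_ample:
  assumes "C \<subseteq> Pow X"
    and "\<And>Y. Y \<subseteq> X \<Longrightarrow> shatters C Y \<Longrightarrow> shatters (Pow X - C) (X - Y) \<Longrightarrow> False"
  shows "ample X C"
  unfolding ample_def
proof (intro allI impI)
  fix Y assume Y: "Y \<subseteq> X" "shatters C Y"
  have ns: "\<not> shatters (Pow X - C) (X - Y)" using assms(2) Y by blast
  define M where "M = {c \<inter> (X - Y) | c. c \<in> Pow X - C}"
  have sub: "M \<subseteq> Pow (X - Y)" unfolding M_def by blast
  have neq: "M \<noteq> Pow (X - Y)" using ns unfolding shatters_def M_def .
  have "\<exists>T. T \<in> Pow (X - Y) \<and> T \<notin> M"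
  proof (rule ccontr)
    assume "\<not> (\<exists>T. T \<in> Pow (X - Y) \<and> T \<notin> M)"
    then have "Pow (X - Y) \<subseteq> M" by blast
    then have "M = Pow (X - Y)" using sub by (rule subset_antisym[rotated])
    then show False using neq by contradiction
  qed
  then obtain T where T1: "T \<subseteq> X - Y" and TM: "T \<notin> M" by blast
  have T2: "c \<inter> (X - Y) \<noteq> T" if "c \<in> Pow X - C" for c
  proof
    assume "c \<inter> (X - Y) = T"
    then have "T \<in> M" unfolding M_def using that by blast
    then show False using TM by contradiction
  qed
  have "cube T Y \<subseteq> C"
  proof
    fix c assume "c \<in> cube T Y"
    then obtain Z where Z: "Z \<subseteq> Y" "c = T \<union> Z" unfolding cube_def by blast
    have cX: "c \<subseteq> X" using Z T1 Y(1) by blast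
    have cT: "c \<inter> (X - Y) = T" using Z T1 by blast
    show "c \<in> C"
    proof (rule ccontr)
      assume "c \<notin> C"
      then have "c \<in> Pow X - C" using cX by blast
      then show False using T2 cT by blast
    qed
  qed
  then show "\<exists>T. T \<subseteq> X - Y \<and> cube T Y \<subseteq> C" using T1 by blast
qed

lemma ample_compl:
  assumes "C \<subseteq> Pow X" "ample X C"
  shows "ample X (Pow X - C)"
proof (rule no_violation_ample)
  fix Y assume Y: "Y \<subseteq> X" "shatters (Pow X - C) Y" "shatters (Pow X - (Pow X - C)) (X - Y)"
  have e1: "Pow X - (Pow X - C) = C" using assms(1) by blast
  have e2: "X - (X - Y) = Y" using Y(1) by blast
  have s1: "shatters C (X - Y)" using Y(3) unfolding e1 .
  have s2: "shatters (Pow X - C) (X - (X - Y))" using Y(2) unfolding e2 .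
  show False using ample_no_violation[OF assms(2) _ s1 s2] by blast
next
  show "Pow X - C \<subseteq> Pow X" by blast
qed

lemma sd_commute: "sd a b = sd b a" unfolding sd_def by blast

lemma sd_self: "sd a a = {}" unfolding sd_def by blast

lemma sd_empty_iff: "sd a b = {} \<longleftrightarrow> a = b" unfolding sd_def by blast

lemma sd_cancel: "sd a c = sd b c \<Longrightarrow> a = b" unfolding sd_def by blast

lemma sd_sd: "sd (sd a b) b = a" unfolding sd_def by blast

lemma sd_sub_X: "a \<subseteq> X \<Longrightarrow> b \<subseteq> X \<Longrightarrow> sd a b \<subseteq> X" unfolding sd_def by blast

lemma sd_solve: "sd v w = D \<Longrightarrow> w = sd v D" unfolding sd_def by blast

lemma antipodal:
  assumes "finite X" "C \<subseteq> Pow X" "D \<subseteq> X" "2 \<le> card D" "p \<subseteq> X" "q \<subseteq> X" "sd p q = D"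
    and cond: "\<And>c. c \<subseteq> X \<Longrightarrow> sd c p \<subseteq> D \<Longrightarrow> (c \<in> C \<longleftrightarrow> c = p \<or> c = q)"
  shows "\<not> ample X C"
proof
  assume amp: "ample X C"
  have "D \<noteq> {}" using assms(4) by (cases "D = {}") auto
  then obtain x where x: "x \<in> D" by blast
  have pp: "sd p p \<subseteq> D" by (simp add: sd_self)
  have pC: "p \<in> C" using cond[OF assms(5) pp] by blast
  have qq: "sd q p \<subseteq> D" using assms(7) sd_commute by (metis order_refl)
  have qC: "q \<in> C" using cond[OF assms(6) qq] by blast
  have qp: "q - D = p - D" using assms(7) unfolding sd_def by blast
  have xpq: "(x \<in> p) \<noteq> (x \<in> q)" using assms(7) x unfolding sd_def by blast
  have pE: "p \<inter> (X - D) = p - D" using assms(5) by blast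
  have qE: "q \<inter> (X - D) = p - D" using assms(6) qp by blast
  have "\<exists>Y'. Y' \<subseteq> X \<and> shatters C Y' \<and> shatters (Pow X - C) (X - Y')"
  proof (rule lift[of "X - D" X "p - D" "{x}" C])
    show "finite (X - D)" using assms(1) by simp
    show "X - D \<subseteq> X" by blast
    show "p - D \<subseteq> X - D" using assms(5) by blast
    show "{x} \<subseteq> X - (X - D)" using assms(3) x by blast
    show "\<forall>S. S \<subseteq> {x} \<longrightarrow> (\<exists>c\<in>C. c \<inter> (X - D) = p - D \<and> c \<inter> {x} = S)"
    proof (intro allI impI)
      fix S assume "S \<subseteq> {x}"
      then have S: "S = {} \<or> S = {x}" by blast
      have e0: "\<exists>c\<in>C. c \<inter> (X - D) = p - D \<and> c \<inter> {x} = {}"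
      proof (cases "x \<in> p")
        case True then have "x \<notin> q" using xpq by blast
        then show ?thesis using qC qE by blast
      next
        case False then show ?thesis using pC pE by blast
      qed
      have e1: "\<exists>c\<in>C. c \<inter> (X - D) = p - D \<and> c \<inter> {x} = {x}"
      proof (cases "x \<in> p")
        case True then show ?thesis using pC pE by blast
      next
        case False then have "x \<in> q" using xpq by blast
        then show ?thesis using qC qE by blast
      qed
      show "\<exists>c\<in>C. c \<inter> (X - D) = p - D \<and> c \<inter> {x} = S" using S e0 e1 by blast
    qed
    show "\<forall>S. S \<subseteq> X - (X - D) - {x} \<longrightarrow> (\<exists>c. c \<subseteq> X \<and> c \<notin> C \<and> c \<inter> (X - D) = p - D \<and> c \<inter> (X - (X - D) - {x}) = S)"
    proof (intro allI impI)
      fix S assume S: "S \<subseteq> X - (X - D) - {x}"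
      define c1 where "c1 = (p - D) \<union> S"
      define c2 where "c2 = insert x c1"
      have c1X: "c1 \<subseteq> X" using S assms(5) unfolding c1_def by blast
      have c2X: "c2 \<subseteq> X" using c1X x assms(3) unfolding c2_def by blast
      have c1E: "c1 \<inter> (X - D) = p - D" using S assms(5) unfolding c1_def by blast
      have c2E: "c2 \<inter> (X - D) = p - D" using c1E x unfolding c2_def by blast
      have c1S: "c1 \<inter> (X - (X - D) - {x}) = S" using S unfolding c1_def by blast
      have c2S: "c2 \<inter> (X - (X - D) - {x}) = S" using c1S unfolding c2_def by blast
      have d1: "sd c1 p \<subseteq> D" using S assms(5) unfolding c1_def sd_def by blast
      have d2: "sd c2 p \<subseteq> D" using d1 x unfolding c2_def sd_def by blast
      have xc1: "x \<notin> c1" using S x unfolding c1_def by blast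
      have s12: "sd c1 c2 = {x}" using xc1 unfolding c2_def sd_def by blast
      have "c1 \<notin> C \<or> c2 \<notin> C"
      proof (rule ccontr)
        assume "\<not> (c1 \<notin> C \<or> c2 \<notin> C)"
        then have h1: "c1 = p \<or> c1 = q" and h2: "c2 = p \<or> c2 = q"
          using cond[OF c1X d1] cond[OF c2X d2] by blast+
        have ne: "c1 \<noteq> c2" using xc1 unfolding c2_def by blast
        have "sd p q = {x}"
        proof (cases "c1 = p")
          case True
          then have "c2 = q" using h2 ne by blast
          then show ?thesis using True s12 by simp
        next
          case False
          then have "c1 = q" "c2 = p" using h1 h2 ne by blast+
          then show ?thesis using s12 sd_commute[of c1 c2] by simp
        qed
        then have "card D = 1" using assms(7) by simp
        then show False using assms(4) by simp
      qed
      then show "\<exists>c. c \<subseteq> X \<and> c \<notin> C \<and> c \<inter> (X - D) = p - D \<and> c \<inter> (X - (X - D) - {x}) = S"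
        using c1X c2X c1E c2E c1S c2S by blast
    qed
  qed
  then obtain Y' where "Y' \<subseteq> X" "shatters C Y'" "shatters (Pow X - C) (X - Y')" by blast
  then show False using ample_no_violation[OF amp] by blast
qed

lemma neighbor_toward:
  assumes "finite X" "B \<subseteq> Pow X" "ample X B" "v \<in> B"
  shows "u \<in> B \<Longrightarrow> u \<noteq> v \<Longrightarrow> \<exists>w\<in>B. w \<noteq> v \<and> (\<exists>x. sd v w = {x} \<and> x \<in> sd v u)"
proof (induction "card (sd u v)" arbitrary: u rule: less_induct)
  case less
  have uX: "u \<subseteq> X" using less.prems(1) assms(2) by blast
  have vX: "v \<subseteq> X" using assms(2,4) by blast
  have finD: "finite (sd u v)" by (rule finite_subset[OF sd_sub_X[OF uX vX] assms(1)])
  show ?case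
  proof (cases "\<exists>u'\<in>B. u' \<noteq> u \<and> u' \<noteq> v \<and> sd u' v \<subseteq> sd u v")
    case True
    then obtain u' where u': "u' \<in> B" "u' \<noteq> u" "u' \<noteq> v" "sd u' v \<subseteq> sd u v" by blast
    have "sd u' v \<noteq> sd u v" using u'(2) sd_cancel[of u' v u] by blast
    then have ps: "sd u' v \<subset> sd u v" using u'(4) by (rule psubsetI[rotated])
    have lt: "card (sd u' v) < card (sd u v)" by (rule psubset_card_mono[OF finD ps])
    obtain w x where w: "w \<in> B" "w \<noteq> v" "sd v w = {x}" "x \<in> sd v u'"
      using less.hyps[OF lt u'(1) u'(3)] by blast
    have "sd v u' \<subseteq> sd v u" using u'(4) sd_commute[of v u'] sd_commute[of v u] by simp
    then have "x \<in> sd v u" using w(4) by blast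
    then show ?thesis using w(1,2,3) by blast
  next
    case False
    show ?thesis
    proof (cases "card (sd u v) = 1")
      case True
      then obtain x where x: "sd u v = {x}" using card_1_singleton_iff[of "sd u v"] by auto
      then have "sd v u = {x}" using sd_commute[of v u] by simp
      then show ?thesis using less.prems by blast
    next
      case c2: False
      have "sd u v \<noteq> {}" using less.prems(2) sd_empty_iff[of u v] by simp
      then have "card (sd u v) \<noteq> 0" using finD by simp
      then have c2': "2 \<le> card (sd u v)" using c2 by linarith
      have "\<not> ample X B"
      proof (rule antipodal[OF assms(1,2) sd_sub_X[OF uX vX] c2' vX uX])
        show "sd v u = sd u v" by (rule sd_commute)
        fix c assume c: "c \<subseteq> X" "sd c v \<subseteq> sd u v"
        show "c \<in> B \<longleftrightarrow> c = v \<or> c = u"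
        proof
          assume cB: "c \<in> B"
          show "c = v \<or> c = u"
          proof (rule ccontr)
            assume "\<not> (c = v \<or> c = u)"
            then have "c \<noteq> u" "c \<noteq> v" by auto
            then show False using False cB c(2) by blast
          qed
        next
          assume "c = v \<or> c = u"
          then show "c \<in> B" using less.prems(1) assms(4) by blast
        qed
      qed
      then show ?thesis using assms(3) by blast
    qed
  qed
qed

lemma ample_add:
  assumes "finite X" "A \<subseteq> Pow X" "ample X A" "v \<subseteq> X" "v \<notin> A"
    and good: "\<forall>u\<in>A. \<exists>w\<in>A. \<exists>x. sd v w = {x} \<and> x \<in> sd v u"
  shows "ample X (insert v A)"
proof (rule no_violation_ample)
  show "insert v A \<subseteq> Pow X" using assms(2,4) by blast
  fix Y assume Y: "Y \<subseteq> X" "shatters (insert v A) Y" "shatters (Pow X - insert v A) (X - Y)"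
  define S0 where "S0 = v \<inter> Y"
  have compl: "shatters (Pow X - A) (X - Y)"
  proof (rule shattersI)
    fix S assume "S \<subseteq> X - Y"
    then obtain c where "c \<in> Pow X - insert v A" "c \<inter> (X - Y) = S" using shattersD[OF Y(3)] by blast
    then show "\<exists>c\<in>Pow X - A. c \<inter> (X - Y) = S" by blast
  qed
  have noS0: "a \<inter> Y \<noteq> S0" if a: "a \<in> A" for a
  proof
    assume aS: "a \<inter> Y = S0"
    have "shatters A Y"
    proof (rule shattersI)
      fix R assume RY: "R \<subseteq> Y"
      obtain c where "c \<in> insert v A" "c \<inter> Y = R" using shattersD[OF Y(2) RY] by blast
      then show "\<exists>c\<in>A. c \<inter> Y = R" using a aS unfolding S0_def by blast
    qed
    then show False using ample_no_violation[OF assms(3) Y(1) _ compl] by blast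
  qed
  have trA: "\<exists>a\<in>A. a \<inter> Y = R" if RY: "R \<subseteq> Y" "R \<noteq> S0" for R
  proof -
    obtain c where "c \<in> insert v A" "c \<inter> Y = R" using shattersD[OF Y(2) RY(1)] by blast
    then show ?thesis using RY(2) unfolding S0_def by blast
  qed
  have nb: "sd v {y} \<in> A" if y: "y \<in> Y" for y
  proof -
    have shA: "shatters A (Y - {y})"
    proof (rule shattersI)
      fix R assume R: "R \<subseteq> Y - {y}"
      have RY: "R \<subseteq> Y" using R by blast
      have yR: "y \<notin> R" using R by blast
      show "\<exists>c\<in>A. c \<inter> (Y - {y}) = R"
      proof (cases "R = S0")
        case False
        obtain a where a: "a \<in> A" "a \<inter> Y = R" using trA[OF RY False] by blast
        have "a \<inter> (Y - {y}) = R" using a(2) yR by blast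
        then show ?thesis using a(1) by blast
      next
        case True
        have ne: "insert y R \<noteq> S0" using True yR by blast
        have iY: "insert y R \<subseteq> Y" using RY y by blast
        obtain a where a: "a \<in> A" "a \<inter> Y = insert y R" using trA[OF iY ne] by blast
        have "a \<inter> (Y - {y}) = R" using a(2) yR by blast
        then show ?thesis using a(1) by blast
      qed
    qed
    have Yy: "Y - {y} \<subseteq> X" using Y(1) by blast
    have "\<exists>T. T \<subseteq> X - (Y - {y}) \<and> cube T (Y - {y}) \<subseteq> A"
      using assms(3) Yy shA unfolding ample_def by simp
    then obtain T where T: "T \<subseteq> X - (Y - {y})" "cube T (Y - {y}) \<subseteq> A" by blast
    define u where "u = T \<union> (S0 - {y})"
    have S0y: "S0 - {y} \<subseteq> Y - {y}" unfolding S0_def by blast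
    have "u \<in> cube T (Y - {y})" unfolding cube_def u_def using S0y by blast
    then have uA: "u \<in> A" using T(2) by blast
    have TY: "T \<inter> Y = T \<inter> {y}" using T(1) y by blast
    have SY: "(S0 - {y}) \<inter> Y = S0 - {y}" unfolding S0_def by blast
    have "u \<inter> Y = (T \<inter> Y) \<union> ((S0 - {y}) \<inter> Y)" unfolding u_def by (rule Int_Un_distrib2)
    then have uY: "u \<inter> Y = (T \<inter> {y}) \<union> (S0 - {y})" unfolding TY SY .
    have yT: "(y \<in> T) \<noteq> (y \<in> v)"
    proof
      assume iff: "(y \<in> T) = (y \<in> v)"
      have "u \<inter> Y = S0"
      proof (cases "y \<in> v")
        case True
        then have "y \<in> T" using iff by simp
        then have e: "T \<inter> {y} \<union> (v \<inter> Y - {y}) = v \<inter> Y" using True y by blast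
        show ?thesis using uY e unfolding S0_def by simp
      next
        case False
        then have "y \<notin> T" using iff by simp
        then have e: "T \<inter> {y} \<union> (v \<inter> Y - {y}) = v \<inter> Y" using False y by blast
        show ?thesis using uY e unfolding S0_def by simp
      qed
      then show False using noS0 uA by blast
    qed
    then have uY2: "u \<inter> Y = sd S0 {y}" using uY y unfolding S0_def sd_def by blast
    obtain w x where w: "w \<in> A" "sd v w = {x}" "x \<in> sd v u" using good uA by blast
    have wsd: "w = sd v {x}" using w(2) by (rule sd_solve)
    have "x \<in> Y"
    proof (rule ccontr)
      assume "x \<notin> Y"
      then have "w \<inter> Y = S0" using wsd unfolding S0_def sd_def by blast
      then show False using noS0 w(1) by blast
    qed
    then have "x = y" using w(3) uY2 unfolding S0_def sd_def by blast
    then have "w = sd v {y}" using wsd by simp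
    then show ?thesis using w(1) by simp
  qed
  define P where "P c \<longleftrightarrow> c \<subseteq> X \<and> c \<notin> insert v A \<and> sd c v \<subseteq> Y" for c
  have vXY: "v \<inter> (X - Y) \<subseteq> X - Y" by blast
  obtain c0 where c0: "c0 \<in> Pow X - insert v A" "c0 \<inter> (X - Y) = v \<inter> (X - Y)"
    using shattersD[OF Y(3) vXY] by blast
  have "P c0" unfolding P_def using c0 assms(4) unfolding sd_def by blast
  then obtain m where m: "P m" "\<And>c. P c \<Longrightarrow> card (sd m v) \<le> card (sd c v)"
    using ex_has_least_nat[of P c0 "\<lambda>c. card (sd c v)"] by blast
  have mX: "m \<subseteq> X" "m \<notin> A" "m \<noteq> v" "sd m v \<subseteq> Y" using m(1) unfolding P_def by auto
  have finD: "finite (sd m v)" by (rule finite_subset[OF subset_trans[OF mX(4) Y(1)] assms(1)])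
  have "sd m v \<noteq> {}" using mX(3) sd_empty_iff[of m v] by simp
  then have "card (sd m v) \<noteq> 0" using finD by simp
  show False
  proof (cases "card (sd m v) = 1")
    case True
    then obtain y where y: "sd m v = {y}" using card_1_singleton_iff[of "sd m v"] by auto
    then have "sd v m = {y}" using sd_commute[of v m] by simp
    then have "m = sd v {y}" by (rule sd_solve)
    moreover have "y \<in> Y" using y mX(4) by blast
    ultimately show False using nb mX(2) by blast
  next
    case False
    then have c2: "2 \<le> card (sd m v)" using \<open>card (sd m v) \<noteq> 0\<close> by linarith
    have "\<not> ample X (Pow X - A)"
    proof (rule antipodal[OF assms(1) _ _ c2 assms(4) mX(1)])
      show "Pow X - A \<subseteq> Pow X" by blast
      show "sd m v \<subseteq> X" using mX(4) Y(1) by blast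
      show "sd v m = sd m v" by (rule sd_commute)
      fix c assume c: "c \<subseteq> X" "sd c v \<subseteq> sd m v"
      show "c \<in> Pow X - A \<longleftrightarrow> c = v \<or> c = m"
      proof
        assume cA: "c \<in> Pow X - A"
        show "c = v \<or> c = m"
        proof (rule ccontr)
          assume ne: "\<not> (c = v \<or> c = m)"
          then have "P c" unfolding P_def using cA c mX(4) by blast
          then have "card (sd m v) \<le> card (sd c v)" by (rule m(2))
          then have "sd c v = sd m v" using card_subset_eq[OF finD c(2)] c(2) card_mono[OF finD c(2)] by linarith
          then have "c = m" by (rule sd_cancel)
          then show False using ne by blast
        qed
      next
        assume "c = v \<or> c = m"
        then show "c \<in> Pow X - A" using assms(4,5) mX(1,2) by blast
      qed
    qed
    then show False using ample_compl[OF assms(2,3)] by blast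
  qed
qed

definition fac :: "nat \<Rightarrow> nat set \<Rightarrow> (nat \<times> bool) set" where
  "fac n a = (\<lambda>i. (i, i \<in> a)) ` {0..<n}"

definition pos :: "(nat \<times> bool) set \<Rightarrow> nat set" where
  "pos \<sigma> = {i. (i, True) \<in> \<sigma>}"

definition goodc :: "nat set \<Rightarrow> nat set set \<Rightarrow> bool" where
  "goodc v A \<longleftrightarrow> (\<forall>u\<in>A. \<exists>w\<in>A. \<exists>x. sd v w = {x} \<and> x \<in> sd v u)"

lemma fac_pos:
  assumes "\<sigma> \<in> cross_facets n"
  shows "fac n (pos \<sigma>) = \<sigma>"
proof -
  have A: "\<sigma> \<subseteq> {0..<n} \<times> UNIV" "\<forall>i<n. ((i, True) \<in> \<sigma>) \<noteq> ((i, False) \<in> \<sigma>)"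
    using assms unfolding cross_facets_def by auto
  show ?thesis unfolding fac_def pos_def
  proof
    show "(\<lambda>i. (i, i \<in> {i. (i, True) \<in> \<sigma>})) ` {0..<n} \<subseteq> \<sigma>" using A by auto
    show "\<sigma> \<subseteq> (\<lambda>i. (i, i \<in> {i. (i, True) \<in> \<sigma>})) ` {0..<n}"
    proof
      fix p assume p: "p \<in> \<sigma>"
      obtain i b where ib: "p = (i, b)" by (cases p)
      have "i < n" using A p ib by auto
      moreover have "b = (i \<in> {i. (i, True) \<in> \<sigma>})" using A p ib \<open>i < n\<close> by (cases b) auto
      ultimately show "p \<in> (\<lambda>i. (i, i \<in> {i. (i, True) \<in> \<sigma>})) ` {0..<n}" using ib by auto
    qed
  qed
qed

lemma pos_sub: "\<sigma> \<in> cross_facets n \<Longrightarrow> pos \<sigma> \<in> Pow {0..<n}"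
  unfolding cross_facets_def pos_def by auto

lemma pos_fac: "a \<subseteq> {0..<n} \<Longrightarrow> pos (fac n a) = a"
  unfolding fac_def pos_def by auto

lemma fac_in: "fac n a \<in> cross_facets n"
  unfolding fac_def cross_facets_def by auto

lemma fac_inj: "inj_on (fac n) (Pow {0..<n})"
  by (rule inj_on_inverseI[of _ pos]) (simp add: pos_fac)

lemma cross_facets_eq: "cross_facets n = fac n ` Pow {0..<n}"
proof
  show "cross_facets n \<subseteq> fac n ` Pow {0..<n}"
    using fac_pos pos_sub by (metis image_eqI subsetI)
  show "fac n ` Pow {0..<n} \<subseteq> cross_facets n" using fac_in by blast
qed

lemma fac_int: "a \<subseteq> {0..<n} \<Longrightarrow> b \<subseteq> {0..<n} \<Longrightarrow>
   fac n a \<inter> fac n b = (\<lambda>i. (i, i \<in> a)) ` ({0..<n} - sd a b)"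
  unfolding fac_def sd_def by auto

lemma card_fac_int: "a \<subseteq> {0..<n} \<Longrightarrow> b \<subseteq> {0..<n} \<Longrightarrow>
   card (fac n a \<inter> fac n b) = n - card (sd a b)"
proof -
  assume ab: "a \<subseteq> {0..<n}" "b \<subseteq> {0..<n}"
  have "inj_on (\<lambda>i. (i, i \<in> a)) ({0..<n} - sd a b)" by (rule inj_onI) auto
  then have "card (fac n a \<inter> fac n b) = card ({0..<n} - sd a b)"
    using fac_int[OF ab] card_image by metis
  also have "\<dots> = n - card (sd a b)"
    using card_Diff_subset[of "sd a b" "{0..<n}"] sd_sub_X[OF ab] finite_subset[of "sd a b" "{0..<n}"] by simp
  finally show ?thesis .
qed

lemma sub_fac_int: "a \<subseteq> {0..<n} \<Longrightarrow> b \<subseteq> {0..<n} \<Longrightarrow> c \<subseteq> {0..<n} \<Longrightarrow>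
   (fac n a \<inter> fac n c \<subseteq> fac n a \<inter> fac n b) \<longleftrightarrow> sd a b \<subseteq> sd a c"
proof -
  assume abc: "a \<subseteq> {0..<n}" "b \<subseteq> {0..<n}" "c \<subseteq> {0..<n}"
  have "(fac n a \<inter> fac n c \<subseteq> fac n a \<inter> fac n b) \<longleftrightarrow>
     ((\<lambda>i. (i, i \<in> a)) ` ({0..<n} - sd a c) \<subseteq> (\<lambda>i. (i, i \<in> a)) ` ({0..<n} - sd a b))"
    using fac_int abc by simp
  also have "\<dots> \<longleftrightarrow> ({0..<n} - sd a c \<subseteq> {0..<n} - sd a b)" by auto
  also have "\<dots> \<longleftrightarrow> sd a b \<subseteq> sd a c" using sd_sub_X[of a "{0..<n}" b] abc by blast
  finally show ?thesis .
qed

lemma nb_iff: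
  assumes "a \<subseteq> {0..<n}" "b \<subseteq> {0..<n}" "c \<subseteq> {0..<n}" "a \<noteq> b"
  shows "(fac n a \<inter> fac n c \<subseteq> fac n a \<inter> fac n b \<and> card (fac n a \<inter> fac n b) = n - 1)
     \<longleftrightarrow> (\<exists>x. sd a b = {x} \<and> x \<in> sd a c)"
proof -
  have sX: "sd a b \<subseteq> {0..<n}" by (rule sd_sub_X[OF assms(1,2)])
  have fin: "finite (sd a b)" using finite_subset[OF sX] by simp
  have le: "card (sd a b) \<le> n" using card_mono[OF _ sX] by simp
  have "sd a b \<noteq> {}" using assms(4) unfolding sd_def by blast
  then have ge: "card (sd a b) \<noteq> 0" using fin by simp
  have ce: "card (fac n a \<inter> fac n b) = n - card (sd a b)" by (rule card_fac_int[OF assms(1,2)])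
  have c1: "card (fac n a \<inter> fac n b) = n - 1 \<longleftrightarrow> card (sd a b) = 1"
    unfolding ce using le ge by linarith
  have c2: "card (sd a b) = 1 \<longleftrightarrow> (\<exists>x. sd a b = {x})"
    using card_1_singleton_iff[of "sd a b"] by simp
  have s1: "(fac n a \<inter> fac n c \<subseteq> fac n a \<inter> fac n b) \<longleftrightarrow> sd a b \<subseteq> sd a c"
    by (rule sub_fac_int[OF assms(1,2,3)])
  show ?thesis unfolding s1 c1 c2 by auto
qed

lemma pure_iff:
  assumes "finite s"
  shows "pure_of_size (Pow s \<inter> (\<Union>i\<in>I. Pow (t i))) k \<longleftrightarrow>
    (\<forall>i\<in>I. \<exists>j\<in>I. s \<inter> t i \<subseteq> s \<inter> t j \<and> card (s \<inter> t j) = k)"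
proof
  let ?F = "Pow s \<inter> (\<Union>i\<in>I. Pow (t i))"
  assume P: "pure_of_size ?F k"
  show "\<forall>i\<in>I. \<exists>j\<in>I. s \<inter> t i \<subseteq> s \<inter> t j \<and> card (s \<inter> t j) = k"
  proof
    fix i assume i: "i \<in> I"
    have inF: "s \<inter> t i \<in> ?F" using i by blast
    have finF: "finite ?F" by (rule finite_subset[OF Int_lower1]) (simp add: assms)
    have "\<exists>m\<in>?F. s \<inter> t i \<le> m \<and> (\<forall>b\<in>?F. m \<le> b \<longrightarrow> m = b)"
      by (rule finite_has_maximal2[OF finF inF])
    then obtain m where m1: "m \<in> ?F" and m23: "s \<inter> t i \<le> m \<and> (\<forall>b\<in>?F. m \<le> b \<longrightarrow> m = b)" ..
    have m: "m \<in> ?F" "s \<inter> t i \<subseteq> m" "\<forall>b\<in>?F. m \<subseteq> b \<longrightarrow> m = b"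
      using m1 m23 by auto
    have "m \<in> (\<Union>i\<in>I. Pow (t i))" using m(1) by (rule IntD2)
    then obtain j where j1: "j \<in> I" "m \<subseteq> t j" by blast
    have ms: "m \<subseteq> s" using m(1) by blast
    have j2: "m \<subseteq> s \<inter> t j" using j1(2) ms by blast
    have "s \<inter> t j \<in> ?F" using j1(1) by blast
    then have mj: "m = s \<inter> t j" using m(3) j2 by blast
    have "m \<in> maximal_sets ?F" unfolding maximal_sets_def using m(1) m(3) by blast
    then have "card m = k" using P unfolding pure_of_size_def by blast
    then show "\<exists>j\<in>I. s \<inter> t i \<subseteq> s \<inter> t j \<and> card (s \<inter> t j) = k" using j1(1) m(2) mj by blast
  qed
next
  let ?F = "Pow s \<inter> (\<Union>i\<in>I. Pow (t i))"
  assume G: "\<forall>i\<in>I. \<exists>j\<in>I. s \<inter> t i \<subseteq> s \<inter> t j \<and> card (s \<inter> t j) = k"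
  show "pure_of_size ?F k" unfolding pure_of_size_def
  proof
    fix m assume "m \<in> maximal_sets ?F"
    then have m: "m \<in> ?F" "\<forall>b\<in>?F. m \<subseteq> b \<longrightarrow> m = b" unfolding maximal_sets_def by blast+
    have "m \<in> (\<Union>i\<in>I. Pow (t i))" using m(1) by (rule IntD2)
    then obtain i where i1: "i \<in> I" "m \<subseteq> t i" by blast
    have ms: "m \<subseteq> s" using m(1) by blast
    obtain j where j: "j \<in> I" "s \<inter> t i \<subseteq> s \<inter> t j" "card (s \<inter> t j) = k" using G i1(1) by blast
    have "s \<inter> t j \<in> ?F" using j(1) by blast
    moreover have "m \<subseteq> s \<inter> t j" using i1(2) ms j(2) by blast
    ultimately have "m = s \<inter> t j" using m(2) by blast
    then show "finite m \<and> card m = k" using j(3) assms by simp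
  qed
qed

lemma shell_step:
  assumes "distinct bs" "set bs \<subseteq> Pow {0..<n}" "j < length bs"
  shows "pure_of_size (Pow (map (fac n) bs ! j) \<inter> (\<Union>i<j. Pow (map (fac n) bs ! i))) (n - 1)
     \<longleftrightarrow> goodc (bs ! j) (set (take j bs))"
proof -
  have fin: "finite (map (fac n) bs ! j)" using assms(3) unfolding fac_def by simp
  have inX: "bs ! i \<subseteq> {0..<n}" if "i < length bs" for i using assms(2) that nth_mem by blast
  have ne: "bs ! j \<noteq> bs ! k" if "k < j" for k using assms(1,3) that nth_eq_iff_index_eq by fastforce
  have "pure_of_size (Pow (map (fac n) bs ! j) \<inter> (\<Union>i<j. Pow (map (fac n) bs ! i))) (n - 1)
     \<longleftrightarrow> (\<forall>i\<in>{..<j}. \<exists>k\<in>{..<j}. map (fac n) bs ! j \<inter> map (fac n) bs ! i \<subseteq> map (fac n) bs ! j \<inter> map (fac n) bs ! k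
          \<and> card (map (fac n) bs ! j \<inter> map (fac n) bs ! k) = n - 1)"
    by (rule pure_iff[OF fin])
  also have "\<dots> \<longleftrightarrow> (\<forall>i\<in>{..<j}. \<exists>k\<in>{..<j}. \<exists>x. sd (bs ! j) (bs ! k) = {x} \<and> x \<in> sd (bs ! j) (bs ! i))"
  proof -
    have "\<And>i k. i < j \<Longrightarrow> k < j \<Longrightarrow>
      (map (fac n) bs ! j \<inter> map (fac n) bs ! i \<subseteq> map (fac n) bs ! j \<inter> map (fac n) bs ! k
          \<and> card (map (fac n) bs ! j \<inter> map (fac n) bs ! k) = n - 1)
      \<longleftrightarrow> (\<exists>x. sd (bs ! j) (bs ! k) = {x} \<and> x \<in> sd (bs ! j) (bs ! i))"
    proof -
      fix i k assume ik: "i < j" "k < j"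
      then have "i < length bs" "k < length bs" using assms(3) by auto
      then show "?thesis i k" using nb_iff[OF inX[OF assms(3)] inX[of k] inX[of i] ne[OF ik(2)]] assms(3)
        by simp
    qed
    then show ?thesis by (meson lessThan_iff)
  qed
  also have "\<dots> \<longleftrightarrow> goodc (bs ! j) (set (take j bs))"
  proof -
    have st: "set (take j bs) = (\<lambda>i. bs ! i) ` {..<j}"
      using nth_image[of j bs] assms(3) by (simp add: atLeast0LessThan)
    show ?thesis unfolding goodc_def st by blast
  qed
  finally show ?thesis .
qed

lemma ps_map:
  assumes "set bs \<subseteq> Pow {0..<n}"
  shows "partial_shelling n (map (fac n) bs) \<longleftrightarrow>
    distinct bs \<and> (\<forall>j. 1 \<le> j \<and> j < length bs \<longrightarrow> goodc (bs ! j) (set (take j bs)))"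
proof -
  have d: "distinct (map (fac n) bs) \<longleftrightarrow> distinct bs"
    using distinct_map inj_on_subset[OF fac_inj assms] by blast
  have s: "set (map (fac n) bs) \<subseteq> cross_facets n" using fac_in by auto
  show ?thesis unfolding partial_shelling_def d using s shell_step[OF _ assms] by auto
qed

lemma nth_notin_take: "distinct xs \<Longrightarrow> j < length xs \<Longrightarrow> xs ! j \<notin> set (take j xs)"
proof
  assume d: "distinct xs" and j: "j < length xs" and m: "xs ! j \<in> set (take j xs)"
  then obtain i where i: "i < length (take j xs)" "take j xs ! i = xs ! j" by (auto simp: in_set_conv_nth)
  have ij: "i < j" using i(1) by simp
  have "xs ! i = xs ! j" using i ij by simp
  then have "i = j" using nth_eq_iff_index_eq[OF d] ij j by simp
  then show False using ij by simp
qed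

lemma ample_empty: "ample X {}"
  unfolding ample_def shatters_def by auto

theorem corollary4p4:
  assumes "\<forall>(X::nat set) C. finite X \<and> C \<subseteq> Pow X \<and> ample X C \<longrightarrow> dismantlable X C"
  shows "\<forall>n. extendably_shellable n"
proof (intro allI)
  fix n
  show "extendably_shellable n" unfolding extendably_shellable_def
  proof (intro allI impI)
    fix \<sigma>s assume ps: "partial_shelling n \<sigma>s"
    define X where "X = {0..<n::nat}"
    have finX: "finite X" unfolding X_def by simp
    define as where "as = map pos \<sigma>s"
    have setS: "set \<sigma>s \<subseteq> cross_facets n" using ps unfolding partial_shelling_def by blast
    have Seq0: "map (fac n) as = \<sigma>s" unfolding as_def map_map
    proof (rule map_idI)
      fix \<sigma> assume "\<sigma> \<in> set \<sigma>s"
      then have "\<sigma> \<in> cross_facets n" using setS by blast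
      then show "(fac n \<circ> pos) \<sigma> = \<sigma>" using fac_pos by simp
    qed
    then have Seq: "\<sigma>s = map (fac n) as" by simp
    have asX: "set as \<subseteq> Pow X"
    proof
      fix a assume "a \<in> set as"
      then obtain \<sigma> where "\<sigma> \<in> set \<sigma>s" "a = pos \<sigma>" unfolding as_def by auto
      then show "a \<in> Pow X" using pos_sub setS unfolding X_def by blast
    qed
    have asX': "set as \<subseteq> Pow {0..<n}" using asX unfolding X_def .
    have psm: "partial_shelling n (map (fac n) as)" using ps Seq0 by simp
    have psi: "distinct as \<and> (\<forall>j. 1 \<le> j \<and> j < length as \<longrightarrow> goodc (as ! j) (set (take j as)))"
      using ps_map[OF asX'] psm by blast
    have psa1: "distinct as" using psi by blast
    have psa2: "goodc (as ! j) (set (take j as))" if "1 \<le> j" "j < length as" for j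
      using psi that by blast
    have ampA: "ample X (set (take j as))" if "j \<le> length as" for j
      using that
    proof (induction j)
      case 0
      then show ?case by (simp add: ample_empty)
    next
      case (Suc j)
      then have jl: "j < length as" by simp
      have e: "set (take (Suc j) as) = insert (as ! j) (set (take j as))"
        using jl by (simp add: take_Suc_conv_app_nth)
      have g: "goodc (as ! j) (set (take j as))"
      proof (cases "j = 0")
        case True then show ?thesis unfolding goodc_def by simp
      next
        case False then show ?thesis using psa2[of j] jl by simp
      qed
      have "ample X (insert (as ! j) (set (take j as)))"
      proof (rule ample_add[OF finX])
        show "set (take j as) \<subseteq> Pow X" by (rule subset_trans[OF set_take_subset asX])
        show "ample X (set (take j as))" using Suc.IH jl by simp
        show "as ! j \<subseteq> X" using asX jl nth_mem by blast
        show "as ! j \<notin> set (take j as)" using nth_notin_take[OF psa1 jl] .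
        show "\<forall>u\<in>set (take j as). \<exists>w\<in>set (take j as). \<exists>x. sd (as ! j) w = {x} \<and> x \<in> sd (as ! j) u"
          using g unfolding goodc_def .
      qed
      then show ?case using e by simp
    qed
    define A where "A = set as"
    have ampleA: "ample X A" using ampA[of "length as"] unfolding A_def by simp
    have AX: "A \<subseteq> Pow X" using asX unfolding A_def .
    have ampC: "ample X (Pow X - A)" using ample_compl[OF AX ampleA] .
    have CX: "Pow X - A \<subseteq> Pow X" by blast
    have "dismantlable X (Pow X - A)" by (rule assms[rule_format]) (intro conjI finX CX ampC)
    then obtain cs where cs: "distinct cs" "set cs = Pow X - A"
      "\<And>i. 1 \<le> i \<Longrightarrow> i \<le> length cs \<Longrightarrow> ample X (set (take i cs))"
      unfolding dismantlable_def by blast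
    have ampB: "ample X (Pow X - set (take k cs))" if "k \<le> length cs" for k
    proof (cases "k = 0")
      case True
      have "ample X (Pow X - {})" by (rule ample_compl[OF empty_subsetI ample_empty])
      then show ?thesis using True by simp
    next
      case False
      have sub: "set (take k cs) \<subseteq> Pow X" using set_take_subset[of k cs] cs(2) by blast
      have "ample X (set (take k cs))" using cs(3)[of k] False that by simp
      then show ?thesis using ample_compl[OF sub] by blast
    qed
    define bs where "bs = as @ rev cs"
    have setbs: "set bs = A \<union> set cs" unfolding bs_def A_def by simp
    have bsPX: "set bs = Pow X" using setbs cs(2) AX by blast
    have bsX: "set bs \<subseteq> Pow {0..<n}" using bsPX unfolding X_def by blast
    have disjAC: "set as \<inter> set (rev cs) = {}" using cs(2) unfolding A_def by simp
    have dbs: "distinct bs" unfolding bs_def distinct_append using psa1 cs(1) disjAC by simp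
    have goodbs: "goodc (bs ! j) (set (take j bs))" if j: "1 \<le> j" "j < length bs" for j
    proof (cases "j < length as")
      case True
      have e1: "bs ! j = as ! j" unfolding bs_def using True by (simp add: nth_append)
      have e2: "take j bs = take j as" unfolding bs_def using True by simp
      show ?thesis unfolding e1 e2 using psa2[OF j(1) True] .
    next
      case False
      define t where "t = j - length as"
      define N where "N = length cs"
      have jt: "j = length as + t" using False unfolding t_def by simp
      have tN: "t < N" using j(2) jt unfolding N_def bs_def by simp
      define k where "k = N - Suc t"
      have kN: "k < N" using tN unfolding k_def by simp
      have bj0: "bs ! j = rev cs ! t" unfolding bs_def jt by (simp add: nth_append)
      have bj: "bs ! j = cs ! k" unfolding bj0 k_def N_def using tN N_def by (simp add: rev_nth)
      have tk0: "take j bs = as @ take t (rev cs)" unfolding bs_def jt by simp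
      have tk1: "take t (rev cs) = rev (drop (N - t) cs)" unfolding N_def by (simp add: take_rev)
      have Nt: "N - t = Suc k" unfolding k_def using tN by simp
      have tk: "take j bs = as @ rev (drop (Suc k) cs)" using tk0 tk1 Nt by simp
      have sets: "set cs = set (take (Suc k) cs) \<union> set (drop (Suc k) cs)"
        by (metis append_take_drop_id set_append)
      have disj: "set (take (Suc k) cs) \<inter> set (drop (Suc k) cs) = {}"
        using cs(1) by (metis distinct_append append_take_drop_id)
      have st0: "set (take j bs) = A \<union> set (drop (Suc k) cs)" unfolding tk A_def by simp
      have st: "set (take j bs) = Pow X - set (take (Suc k) cs)"
        unfolding st0 using sets disj cs(2) AX by blast
      have tS: "set (take (Suc k) cs) = insert (cs ! k) (set (take k cs))"
        using kN unfolding N_def by (simp add: take_Suc_conv_app_nth)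
      let ?B = "Pow X - set (take k cs)"
      have ampB': "ample X ?B" using ampB kN unfolding N_def by simp
      have BX: "?B \<subseteq> Pow X" by blast
      have vin: "cs ! k \<in> set cs" using kN unfolding N_def by simp
      have vnt: "cs ! k \<notin> set (take k cs)" using nth_notin_take[OF cs(1)] kN unfolding N_def by blast
      have vB: "cs ! k \<in> ?B" using vin vnt cs(2) by blast
      show ?thesis unfolding goodc_def bj st
      proof
        fix u assume u: "u \<in> Pow X - set (take (Suc k) cs)"
        have uB: "u \<in> ?B" "u \<noteq> cs ! k" using u tS by blast+
        obtain w x where w: "w \<in> ?B" "w \<noteq> cs ! k" "sd (cs ! k) w = {x}" "x \<in> sd (cs ! k) u"
          using neighbor_toward[OF finX BX ampB' vB uB] by blast
        have "w \<in> Pow X - set (take (Suc k) cs)" using w(1,2) tS by blast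
        then show "\<exists>w\<in>Pow X - set (take (Suc k) cs). \<exists>x. sd (cs ! k) w = {x} \<and> x \<in> sd (cs ! k) u"
          using w(3,4) by blast
      qed
    qed
    have psb: "partial_shelling n (map (fac n) bs)"
      using ps_map[OF bsX] dbs goodbs by blast
    have "set (map (fac n) bs) = cross_facets n"
      unfolding cross_facets_eq set_map bsPX X_def ..
    then have "shelling n (map (fac n) bs)" using psb unfolding shelling_def by blast
    moreover have "map (fac n) bs = \<sigma>s @ map (fac n) (rev cs)" unfolding Seq bs_def by simp
    ultimately show "\<exists>\<tau>s. shelling n (\<sigma>s @ \<tau>s)" by metis
  qed
qed

end
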